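(* For any distribution $P_{\bar Z\bar Y}$ on $\widehat{\mathcal S}\times\widehat{\mathcal X}$ and any positive integer $M$, there exists a deterministic $(M,d_s,d_x,\epsilon)$ code with \[\epsilon\le\int_0^1\mathbb E\Big[\big(\mathbb P[\pi(X,\bar Z,\bar Y)>t\mid X]\big)^M\Big]\,\mathrm dt,\] where $(X,\bar Z,\bar Y)\sim P_X\times P_{\bar Z\bar Y}$ and $\pi(x,z,y)=\mathbb P[\mathsf d_s(S,z)>d_s\text{ or }\mathsf d_x(x,y)>d_x\mid X=x]$ with $S\sim P_{S|X=x}$.
   Context: Let $\mathcal S,\mathcal X,\widehat{\mathcal S},\widehat{\mathcal X}$ be finite sets, $P_{SX}$ a distribution on $\mathcal S\times\mathcal X$, and $\mathsf d_s:\mathcal S\times\widehat{\mathcal S}\to[0,\infty)$, $\mathsf d_x:\mathcal X\times\widehat{\mathcal X}\to[0,\infty)$ distortion measures; fix $d_s,d_x\ge0$. An $(M,d_s,d_x,\epsilon)$ code is a random encoder $P_{U|X}:\mathcal X\to\{1,\dots,M\}$ and a random decoder $P_{ZY|U}:\{1,\dots,M\}\to\widehat{\mathcal S}\times\widehat{\mathcal X}$ (so $S-X-U-(Z,Y)$) such that $\mathbb P[\mathsf d_s(S,Z)>d_s\text{ or }\mathsf d_x(X,Y)>d_x]\le\epsilon$; it is deterministic if both mappings are deterministic functions. *)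

theory Defs
  imports "HOL-Probability.Probability"
begin

definition marg_X :: "('s \<times> 'x) pmf \<Rightarrow> 'x pmf" where
  "marg_X P = map_pmf snd P"

text \<open>pi(x,z,y) = P[ds(S,z) > Ds or dx(x,y) > Dx | X = x], S ~ P_{S|X=x}.
  Convention: 0 when P_X(x) = 0 (such x carry zero weight).\<close>
definition pi_fn :: "('s \<times> 'x) pmf \<Rightarrow> ('s \<Rightarrow> 'zh \<Rightarrow> real) \<Rightarrow> ('x \<Rightarrow> 'yh \<Rightarrow> real)
    \<Rightarrow> real \<Rightarrow> real \<Rightarrow> 'x \<Rightarrow> 'zh \<Rightarrow> 'yh \<Rightarrow> real" where
  "pi_fn P ds dx Ds Dx x z y =
     measure_pmf.prob P {(s, x'). x' = x \<and> (ds s z > Ds \<or> dx x y > Dx)}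
     / pmf (marg_X P) x"

definition det_code_error :: "('s \<times> 'x) pmf \<Rightarrow> ('s \<Rightarrow> 'zh \<Rightarrow> real) \<Rightarrow> ('x \<Rightarrow> 'yh \<Rightarrow> real)
    \<Rightarrow> real \<Rightarrow> real \<Rightarrow> ('x \<Rightarrow> nat) \<Rightarrow> (nat \<Rightarrow> 'zh \<times> 'yh) \<Rightarrow> real" where
  "det_code_error P ds dx Ds Dx f g =
     measure_pmf.prob P {(s, x). ds s (fst (g (f x))) > Ds \<or> dx x (snd (g (f x))) > Dx}"

definition is_det_code :: "('s \<times> 'x) pmf \<Rightarrow> ('s \<Rightarrow> 'zh \<Rightarrow> real) \<Rightarrow> ('x \<Rightarrow> 'yh \<Rightarrow> real)
    \<Rightarrow> nat \<Rightarrow> real \<Rightarrow> real \<Rightarrow> real \<Rightarrow> ('x \<Rightarrow> nat) \<Rightarrow> (nat \<Rightarrow> 'zh \<times> 'yh) \<Rightarrow> bool" where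
  "is_det_code P ds dx M Ds Dx eps f g \<longleftrightarrow>
     (\<forall>x. f x \<in> {1..M}) \<and> det_code_error P ds dx Ds Dx f g \<le> eps"

end

theory Submission imports Defs begin
lemma L1: fixes v :: real assumes "0 \<le> v" "v \<le> 1"
  shows "((\<lambda>t. if t < v then 1 else 0) has_integral v) {0..1}"
proof -
  have a: "((\<lambda>t::real. if t < v then 1 else 0) has_integral v) {0..v}"
  proof -
    have "((\<lambda>t::real. 1::real) has_integral v) {0..v}"
      using has_integral_const_real[of "1::real" 0 v] assms by simp
    then show ?thesis
      by (rule has_integral_spike_finite[where S="{v}", rotated 2]) auto
  qed
  have b: "((\<lambda>t::real. if t < v then 1 else 0) has_integral 0) {v..1}"
    by (rule has_integral_spike_finite[where S="{}", OF _ _ has_integral_0]) auto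
  show ?thesis using has_integral_combine[OF assms a b] by simp
qed

lemma L2: "0 \<le> pi_fn P ds dx Ds Dx x z y \<and> pi_fn P ds dx Ds Dx x z y \<le> 1"
proof -
  have "measure_pmf.prob P {(s, x'). x' = x \<and> (ds s z > Ds \<or> dx x y > Dx)}
        \<le> measure_pmf.prob P (snd -` {x})"
    by (rule measure_pmf.finite_measure_mono) auto
  also have "\<dots> = pmf (marg_X P) x" by (simp add: marg_X_def pmf_map)
  finally show ?thesis unfolding pi_fn_def
    by (cases "pmf (marg_X P) x = 0") (auto simp: divide_le_eq_1)
qed

lemma L3:
  fixes P :: "('s::finite \<times> 'x::finite) pmf"
  shows "det_code_error P ds dx Ds Dx f g =
    (\<Sum>x\<in>UNIV. pmf (marg_X P) x * pi_fn P ds dx Ds Dx x (fst (g (f x))) (snd (g (f x))))"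
proof -
  define C where "C = (\<lambda>s x. ds s (fst (g (f x))) > Ds \<or> dx x (snd (g (f x))) > Dx)"
  have num: "pmf (marg_X P) x * pi_fn P ds dx Ds Dx x (fst (g (f x))) (snd (g (f x)))
     = measure_pmf.prob P {(s, x'). x' = x \<and> C s x}" for x
  proof -
    have le: "measure_pmf.prob P {(s, x'). x' = x \<and> C s x} \<le> pmf (marg_X P) x"
    proof -
      have "measure_pmf.prob P {(s, x'). x' = x \<and> C s x} \<le> measure_pmf.prob P (snd -` {x})"
        by (rule measure_pmf.finite_measure_mono) auto
      also have "\<dots> = pmf (marg_X P) x" by (simp add: marg_X_def pmf_map)
      finally show ?thesis .
    qed
    show ?thesis
      using le unfolding pi_fn_def C_def
      by (cases "pmf (marg_X P) x = 0") (auto intro: antisym)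
  qed
  have "det_code_error P ds dx Ds Dx f g = sum (pmf P) {(s, x). C s x}"
    unfolding det_code_error_def C_def by (simp add: measure_measure_pmf_finite case_prod_beta)
  also have "\<dots> = (\<Sum>p\<in>UNIV. if C (fst p) (snd p) then pmf P p else 0)"
    by (simp add: sum.If_cases Int_def, rule arg_cong[where f="sum _"]) auto
  also have "\<dots> = (\<Sum>x\<in>UNIV. \<Sum>s\<in>UNIV. if C s x then pmf P (s, x) else 0)"
    by (subst sum.swap, subst UNIV_Times_UNIV[symmetric], subst sum.cartesian_product) (auto simp: case_prod_beta intro!: sum.cong)
  also have "\<dots> = (\<Sum>x\<in>UNIV. measure_pmf.prob P {(s, x'). x' = x \<and> C s x})"
  proof (rule sum.cong[OF refl])
    fix x
    have "measure_pmf.prob P {(s, x'). x' = x \<and> C s x} = sum (pmf P) ((\<lambda>s. (s, x)) ` {s. C s x})"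
      by (simp add: measure_measure_pmf_finite) (rule arg_cong[where f="sum _"], auto)
    also have "\<dots> = sum (\<lambda>s. pmf P (s, x)) {s. C s x}"
      by (subst sum.reindex) (auto simp: inj_on_def)
    also have "\<dots> = (\<Sum>s\<in>UNIV. if C s x then pmf P (s, x) else 0)"
      by (simp add: sum.If_cases)
    finally show "(\<Sum>s\<in>UNIV. if C s x then pmf P (s, x) else 0) = measure_pmf.prob P {(s, x'). x' = x \<and> C s x}" by simp
  qed
  finally show ?thesis by (simp add: num)
qed
theorem theorem1:
  fixes P :: "('s::finite \<times> 'x::finite) pmf"
    and Q :: "('zh::finite \<times> 'yh::finite) pmf"
    and ds :: "'s \<Rightarrow> 'zh \<Rightarrow> real" and dx :: "'x \<Rightarrow> 'yh \<Rightarrow> real"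
    and Ds Dx :: real and M :: nat
  assumes "\<And>s z. ds s z \<ge> 0" and "\<And>x y. dx x y \<ge> 0"
    and "Ds \<ge> 0" and "Dx \<ge> 0" and "M \<ge> 1"
  shows "\<exists>f g. is_det_code P ds dx M Ds Dx
           (integral {0..1} (\<lambda>t. measure_pmf.expectation (marg_X P)
              (\<lambda>x. (measure_pmf.prob Q {(z, y). pi_fn P ds dx Ds Dx x z y > t}) ^ M)))
           f g"
proof -
  define pi where "pi = (\<lambda>x p. pi_fn P ds dx Ds Dx x (fst p) (snd p))"
  define R where "R = Pi_pmf {1..M} undefined (\<lambda>_. Q)"
  define SR where "SR = set_pmf R"
  define pX where "pX = pmf (marg_X P)"
  have finSR: "finite SR" unfolding SR_def R_def
    by (subst set_Pi_pmf) auto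
  have neM: "{1..M} \<noteq> {}" using assms(5) by auto
  define fc where "fc = (\<lambda>c x. arg_min_on (\<lambda>m. pi x (c m)) {1..M})"
  define mv where "mv = (\<lambda>c x. pi x (c (fc c x)))"
  define err where "err = (\<lambda>c. \<Sum>x\<in>UNIV. pX x * mv c x)"
  have fc_in: "fc c x \<in> {1..M}" for c x
    unfolding fc_def using arg_min_if_finite(1)[OF _ neM] by auto
  have fc_min: "\<And>m. m \<in> {1..M} \<Longrightarrow> mv c x \<le> pi x (c m)" for c x
    unfolding mv_def fc_def using arg_min_if_finite(2)[OF _ neM, of "\<lambda>m. pi x (c m)"] by force
  have mv01: "0 \<le> mv c x \<and> mv c x \<le> 1" for c x
    unfolding mv_def pi_def by (rule L2)
  have err_eq: "det_code_error P ds dx Ds Dx (fc c) c = err c" for c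
    unfolding err_def mv_def pi_def pX_def by (simp add: L3)
  have setEq: "{c. t < mv c x} = Pi {1..M} (\<lambda>_. {p. t < pi x p})" for t x
  proof (intro set_eqI iffI)
    fix c assume "c \<in> {c. t < mv c x}"
    then have tc: "t < mv c x" by simp
    show "c \<in> Pi {1..M} (\<lambda>_. {p. t < pi x p})"
    proof (rule Pi_I)
      fix m assume "m \<in> {1..M}"
      then have "mv c x \<le> pi x (c m)" by (rule fc_min)
      with tc show "c m \<in> {p. t < pi x p}" by simp
    qed
  next
    fix c assume "c \<in> Pi {1..M} (\<lambda>_. {p. t < pi x p})"
    then show "c \<in> {c. t < mv c x}" using fc_in[of c x] unfolding mv_def by auto
  qed
  have probR: "(\<Sum>c\<in>SR. pmf R c * (if t < mv c x then 1 else 0)) = (measure_pmf.prob Q {p. t < pi x p}) ^ M" for t x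
  proof -
    have "(\<Sum>c\<in>SR. pmf R c * (if t < mv c x then 1 else 0)) = sum (pmf R) (SR \<inter> {c. t < mv c x})"
      using finSR by (subst sum.inter_restrict) (auto intro!: sum.cong)
    also have "\<dots> = measure_pmf.prob R {c. t < mv c x}"
    proof -
      have "measure_pmf.prob R {c. t < mv c x} = measure_pmf.prob R ({c. t < mv c x} \<inter> set_pmf R)"
        by (rule measure_Int_set_pmf[symmetric])
      also have "\<dots> = sum (pmf R) ({c. t < mv c x} \<inter> SR)"
        unfolding SR_def by (rule measure_measure_pmf_finite) (use finSR in \<open>auto simp: SR_def\<close>)
      finally show ?thesis by (simp add: Int_commute)
    qed
    also have "\<dots> = (measure_pmf.prob Q {p. t < pi x p}) ^ M"
      unfolding setEq R_def by (subst measure_Pi_pmf_Pi) auto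
    finally show ?thesis .
  qed
  have hx: "((\<lambda>t. (measure_pmf.prob Q {p. t < pi x p}) ^ M) has_integral (\<Sum>c\<in>SR. pmf R c * mv c x)) {0..1}" for x
  proof -
    have "((\<lambda>t. \<Sum>c\<in>SR. pmf R c * (if t < mv c x then 1 else 0)) has_integral (\<Sum>c\<in>SR. pmf R c * mv c x)) {0..1}"
      using finSR by (intro has_integral_sum has_integral_mult_right L1) (auto simp: mv01)
    then show ?thesis by (simp add: probR)
  qed
  have hall: "((\<lambda>t. \<Sum>x\<in>UNIV. pX x * (measure_pmf.prob Q {p. t < pi x p}) ^ M) has_integral (\<Sum>x\<in>UNIV. pX x * (\<Sum>c\<in>SR. pmf R c * mv c x))) {0..1}"
    by (intro has_integral_sum has_integral_mult_right hx) auto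
  have expeq: "measure_pmf.expectation (marg_X P)
              (\<lambda>x. (measure_pmf.prob Q {(z, y). pi_fn P ds dx Ds Dx x z y > t}) ^ M)
        = (\<Sum>x\<in>UNIV. pX x * (measure_pmf.prob Q {p. t < pi x p}) ^ M)" for t
  proof -
    have "{(z, y). pi_fn P ds dx Ds Dx x z y > t} = {p. t < pi x p}" for x
      unfolding pi_def by auto
    then show ?thesis
      by (subst integral_measure_pmf_real[where A=UNIV]) (auto simp: pX_def mult.commute)
  qed
  define T where "T = integral {0..1} (\<lambda>t. measure_pmf.expectation (marg_X P)
              (\<lambda>x. (measure_pmf.prob Q {(z, y). pi_fn P ds dx Ds Dx x z y > t}) ^ M))"
  have "T = (\<Sum>x\<in>UNIV. pX x * (\<Sum>c\<in>SR. pmf R c * mv c x))"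
    unfolding T_def expeq using hall by (rule integral_unique)
  also have "\<dots> = (\<Sum>c\<in>SR. pmf R c * err c)"
  proof -
    have "(\<Sum>x\<in>UNIV. pX x * (\<Sum>c\<in>SR. pmf R c * mv c x)) = (\<Sum>x\<in>UNIV. \<Sum>c\<in>SR. pmf R c * (pX x * mv c x))"
      by (simp add: sum_distrib_left mult.left_commute)
    also have "\<dots> = (\<Sum>c\<in>SR. \<Sum>x\<in>UNIV. pmf R c * (pX x * mv c x))"
      by (rule sum.swap)
    also have "\<dots> = (\<Sum>c\<in>SR. pmf R c * err c)"
      unfolding err_def by (simp add: sum_distrib_left)
    finally show ?thesis .
  qed
  finally have Teq: "T = (\<Sum>c\<in>SR. pmf R c * err c)" .
  have neSR: "SR \<noteq> {}" unfolding SR_def by (rule set_pmf_not_empty)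
  define c0 where "c0 = arg_min_on err SR"
  have c0min: "err c0 \<le> err c" if "c \<in> SR" for c
    using arg_min_if_finite(2)[OF finSR neSR, of err] that unfolding c0_def by force
  have sum1: "(\<Sum>c\<in>SR. pmf R c) = 1"
    using finSR unfolding SR_def by (simp add: sum_pmf_eq_1)
  have "err c0 = (\<Sum>c\<in>SR. pmf R c * err c0)" by (simp add: sum_distrib_right[symmetric] sum1)
  also have "\<dots> \<le> (\<Sum>c\<in>SR. pmf R c * err c)"
    by (intro sum_mono mult_left_mono c0min) auto
  finally have "err c0 \<le> T" using Teq by simp
  then have "is_det_code P ds dx M Ds Dx T (fc c0) c0"
    unfolding is_det_code_def using fc_in err_eq by simp
  then show ?thesis unfolding T_def by blast
qed
end
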